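(* Let $(X,E,\ell)$ be a strongly connected edge-labelled directed graph with label alphabet $\Sigma$, equipped with transition probabilities $p(e)\ge\alpha>0$ for all $e\in E$ (for a constant $\alpha$) satisfying $\sum_{e:\,e^-=x}p(e)\le1$ for every $x\in X$. Let $F\subset\Sigma^+$ be a finite, non-empty set which is relatively dense in $(X,E,\ell)$. Then there exist $k\in\mathbb N$ and $\varepsilon_0>0$ such that $$\sum_{y\in X}p_F^{(k)}(x,y)\le1-\varepsilon_0\quad\text{for all }x\in X.$$
   Context: $\Sigma$ is a finite alphabet, $\Sigma^+$ the set of non-empty finite words. $(X,E,\ell)$ is a directed graph whose edges $e=(x,a,y)$ have initial vertex $e^-=x$, terminal vertex $e^+=y$ and label $\ell(e)=a\in\Sigma$ (two edges with the same endpoints have distinct labels). A path $\pi=e_1\cdots e_n$ has $e_i^+=e_{i+1}^-$, length $n$ and label $\ell(\pi)=\ell(e_1)\cdots\ell(e_n)$. Strongly connected: for any $x,y$ there is a path from $x$ to $y$. $d^+(x,y)$ is the minimal length of a path from $x$ to $y$. $F$ is relatively dense if there is $D$ such that for each $x$ there are $y$ and $w\in F$ with $d^+(x,y)\le D$ and a path starting at $y$ with label $w$. For a path $\pi=e_1\cdots e_n$ let $\mathbb P(\pi)=\prod_i p(e_i)$. Then $p_F^{(n)}(x,y)=\sum\mathbb P(\pi)$, the sum over all paths $\pi$ of length $n$ from $x$ to $y$ whose label contains no element of $F$ as a factor (contiguous subword); this is the probability that the Markov chain (with possible killing) on $X$ moving along edges with probabilities $p(e)$ goes from $x$ to $y$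 in $n$ steps without traversing in consecutive steps a path with label in $F$. *)

theory Defs
  imports "HOL-Analysis.Analysis" "HOL-Library.Sublist"
begin

type_synonym ('v,'a) edge = "'v \<times> 'a \<times> 'v"

definition edge_init :: "('v,'a) edge \<Rightarrow> 'v" where "edge_init e = fst e"
definition edge_lab  :: "('v,'a) edge \<Rightarrow> 'a" where "edge_lab e = fst (snd e)"
definition edge_term :: "('v,'a) edge \<Rightarrow> 'v" where "edge_term e = snd (snd e)"

fun epath :: "('v,'a) edge set \<Rightarrow> 'v \<Rightarrow> ('v,'a) edge list \<Rightarrow> 'v \<Rightarrow> bool" where
  "epath E x [] y = (x = y)"
| "epath E x (e # es) y = (e \<in> E \<and> edge_init e = x \<and> epath E (edge_term e) es y)"

definition path_label :: "('v,'a) edge list \<Rightarrow> 'a list" where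
  "path_label es = map edge_lab es"

definition path_prob :: "(('v,'a) edge \<Rightarrow> real) \<Rightarrow> ('v,'a) edge list \<Rightarrow> real" where
  "path_prob p es = (\<Prod>e\<leftarrow>es. p e)"

definition strongly_connected :: "'v set \<Rightarrow> ('v,'a) edge set \<Rightarrow> bool" where
  "strongly_connected X E \<longleftrightarrow> (\<forall>x\<in>X. \<forall>y\<in>X. \<exists>es. epath E x es y)"

definition dplus :: "('v,'a) edge set \<Rightarrow> 'v \<Rightarrow> 'v \<Rightarrow> nat" where
  "dplus E x y = (LEAST n. \<exists>es. epath E x es y \<and> length es = n)"

definition relatively_dense :: "'a list set \<Rightarrow> 'v set \<Rightarrow> ('v,'a) edge set \<Rightarrow> bool" where
  "relatively_dense F X E \<longleftrightarrow> (\<exists>D::nat. \<forall>x\<in>X. \<exists>y\<in>X. \<exists>w\<in>F.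
      dplus E x y \<le> D \<and> (\<exists>es z. epath E y es z \<and> path_label es = w))"

definition avoiding_paths :: "('v,'a) edge set \<Rightarrow> 'a list set \<Rightarrow> nat \<Rightarrow> 'v \<Rightarrow> 'v \<Rightarrow> ('v,'a) edge list set" where
  "avoiding_paths E F n x y = {es. epath E x es y \<and> length es = n \<and>
      (\<forall>w\<in>F. \<not> sublist w (path_label es))}"

definition pF :: "('v,'a) edge set \<Rightarrow> (('v,'a) edge \<Rightarrow> real) \<Rightarrow> 'a list set \<Rightarrow> nat \<Rightarrow> 'v \<Rightarrow> 'v \<Rightarrow> real" where
  "pF E p F n x y = (\<Sum>\<^sub>\<infinity>es\<in>avoiding_paths E F n x y. path_prob p es)"

end

theory Submission
  imports Defs
begin

definition outE :: "('v,'a) edge set \<Rightarrow> 'v \<Rightarrow> ('v,'a) edge set" where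
  "outE E x = {e\<in>E. edge_init e = x}"

fun endp :: "'v \<Rightarrow> ('v,'a) edge list \<Rightarrow> 'v" where
  "endp x [] = x" | "endp x (e#es) = endp (edge_term e) es"

definition pathsn :: "('v,'a) edge set \<Rightarrow> nat \<Rightarrow> 'v \<Rightarrow> ('v,'a) edge list set" where
  "pathsn E n x = {es. length es = n \<and> (\<exists>y. epath E x es y)}"

definition avn :: "('v,'a) edge set \<Rightarrow> 'a list set \<Rightarrow> nat \<Rightarrow> 'v \<Rightarrow> ('v,'a) edge list set" where
  "avn E F n x = {es \<in> pathsn E n x. \<forall>w\<in>F. \<not> sublist w (path_label es)}"

definition extp :: "('v,'a) edge set \<Rightarrow> 'v \<Rightarrow> ('v,'a) edge list set \<Rightarrow> ('v,'a) edge list set" where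
  "extp E x S = (\<lambda>(\<pi>,e). \<pi>@[e]) ` (SIGMA \<pi>:S. outE E (endp x \<pi>))"

lemma epath_append: "epath E x (xs@ys) z \<longleftrightarrow> (\<exists>y. epath E x xs y \<and> epath E y ys z)"
  by (induction xs arbitrary: x) auto

lemma epath_endp: "epath E x es y \<Longrightarrow> endp x es = y"
  by (induction es arbitrary: x) auto

lemma epath_set: "epath E x es y \<Longrightarrow> set es \<subseteq> E"
  by (induction es arbitrary: x) auto

lemma path_prob_snoc: "path_prob p (xs@[e]) = path_prob p xs * p e"
  by (simp add: path_prob_def)

lemma path_prob_lower: "0 \<le> a \<Longrightarrow> (\<forall>e\<in>set es. p e \<ge> a) \<Longrightarrow> path_prob p es \<ge> a ^ length es"
  unfolding path_prob_def by (induction es) (auto intro: mult_mono order_trans)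

lemma sublist_app_r: "sublist w ys \<Longrightarrow> sublist w (ys @ zs)"
  unfolding sublist_def by (metis append.assoc)

locale G =
  fixes X :: "'v set" and E :: "('v,'a) edge set" and p :: "('v,'a) edge \<Rightarrow> real" and \<alpha> :: real
  assumes Ein: "\<And>e. e\<in>E \<Longrightarrow> edge_init e \<in> X \<and> edge_term e \<in> X"
    and apos: "\<alpha> > 0" and pge: "\<And>e. e\<in>E \<Longrightarrow> p e \<ge> \<alpha>"
    and osum: "\<And>x. x\<in>X \<Longrightarrow> p summable_on outE E x \<and> infsum p (outE E x) \<le> 1"
begin

lemma p_nonneg: "e\<in>E \<Longrightarrow> p e \<ge> 0" using pge[of e] apos by linarith

lemma out_finite: assumes "x\<in>X" shows "finite (outE E x)"
proof (rule ccontr)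
  assume inf: "infinite (outE E x)"
  obtain N::nat where N: "real N * \<alpha> > 1" using reals_Archimedean3[OF apos] by blast
  obtain B where B: "finite B" "card B = N" "B \<subseteq> outE E x"
    using infinite_arbitrarily_large[OF inf] by blast
  have "real N * \<alpha> = (\<Sum>e\<in>B. \<alpha>)" using B by simp
  also have "\<dots> \<le> sum p B" apply (rule sum_mono) using B pge by (auto simp: outE_def)
  also have "\<dots> \<le> infsum p (outE E x)"
    apply (rule finite_sum_le_infsum) using osum assms B p_nonneg by (auto simp: outE_def)
  also have "\<dots> \<le> 1" using osum assms by blast
  finally show False using N by simp
qed

lemma out_sum: "x\<in>X \<Longrightarrow> sum p (outE E x) \<le> 1"
  using osum out_finite by force

lemma endp_in: "x\<in>X \<Longrightarrow> epath E x es y \<Longrightarrow> y\<in>X"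
  by (induction es arbitrary: x) (auto dest: Ein)

lemma P_nonneg: "es \<in> pathsn E n x \<Longrightarrow> path_prob p es \<ge> 0"
proof -
  assume "es \<in> pathsn E n x"
  then obtain y where "epath E x es y" by (auto simp: pathsn_def)
  then have s: "set es \<subseteq> E" by (rule epath_set)
  have "\<forall>v\<in>set (map p es). 0 \<le> v" using s p_nonneg by auto
  then show ?thesis unfolding path_prob_def by (intro prod_list_nonneg) blast
qed

lemma ext_sub: "S \<subseteq> pathsn E n x \<Longrightarrow> extp E x S \<subseteq> pathsn E (Suc n) x"
proof
  fix es assume S: "S \<subseteq> pathsn E n x" and "es \<in> extp E x S"
  then obtain \<pi> e where es: "es = \<pi>@[e]" "\<pi>\<in>S" "e\<in>E" "edge_init e = endp x \<pi>"
    unfolding extp_def outE_def by auto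
  then obtain y where "epath E x \<pi> y" "length \<pi> = n" using S unfolding pathsn_def by auto
  moreover then have "y = endp x \<pi>" using epath_endp by metis
  ultimately have "epath E x es (edge_term e)" "length es = Suc n"
    using es epath_append[of E x \<pi> "[e]" "edge_term e"] by auto
  then show "es \<in> pathsn E (Suc n) x" unfolding pathsn_def by auto
qed

lemma ext_finite:
  assumes "x\<in>X" "finite S" "S \<subseteq> pathsn E n x"
  shows "finite (extp E x S)"
proof -
  have "\<forall>\<pi>\<in>S. finite (outE E (endp x \<pi>))"
    using assms by (auto simp: pathsn_def intro!: out_finite dest: epath_endp intro: endp_in)
  then show ?thesis unfolding extp_def using assms by (auto intro!: finite_imageI)
qed

lemma ext_sum:
  assumes "x\<in>X" "finite S" "S \<subseteq> pathsn E n x"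
  shows "sum (path_prob p) (extp E x S) \<le> sum (path_prob p) S"
proof -
  have fo: "\<forall>\<pi>\<in>S. finite (outE E (endp x \<pi>))"
    using assms by (auto simp: pathsn_def intro!: out_finite dest: epath_endp intro: endp_in)
  have inX: "\<forall>\<pi>\<in>S. endp x \<pi> \<in> X"
    using assms by (auto simp: pathsn_def dest: epath_endp intro: endp_in)
  let ?Sg = "SIGMA \<pi>:S. outE E (endp x \<pi>)"
  have nn: "\<forall>i\<in>?Sg. 0 \<le> path_prob p ((\<lambda>(\<pi>,e). \<pi>@[e]) i)"
  proof
    fix i assume "i\<in>?Sg"
    then have "(\<lambda>(\<pi>,e). \<pi>@[e]) i \<in> extp E x S" unfolding extp_def by blast
    then show "0 \<le> path_prob p ((\<lambda>(\<pi>,e). \<pi>@[e]) i)" using ext_sub[OF assms(3)] P_nonneg by blast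
  qed
  have "sum (path_prob p) (extp E x S) \<le> sum (path_prob p \<circ> (\<lambda>(\<pi>,e). \<pi>@[e])) ?Sg"
    unfolding extp_def
    apply (rule sum_image_le)
    using assms fo apply blast
    using nn by blast
  also have "\<dots> = (\<Sum>\<pi>\<in>S. \<Sum>e\<in>outE E (endp x \<pi>). path_prob p \<pi> * p e)"
    using sum.Sigma[OF assms(2) fo, of "\<lambda>\<pi> e. path_prob p \<pi> * p e"]
    by (simp add: path_prob_snoc case_prod_unfold)
  also have "\<dots> = (\<Sum>\<pi>\<in>S. path_prob p \<pi> * sum p (outE E (endp x \<pi>)))"
    by (simp add: sum_distrib_left)
  also have "\<dots> \<le> (\<Sum>\<pi>\<in>S. path_prob p \<pi>)"
    apply (rule sum_mono) apply (rule mult_left_le)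
    using inX out_sum assms P_nonneg by auto
  finally show ?thesis .
qed

lemma paths_Suc_sub: "pathsn E (Suc n) x \<subseteq> extp E x (pathsn E n x)"
proof
  fix es assume "es \<in> pathsn E (Suc n) x"
  then obtain y where l: "length es = Suc n" and ep: "epath E x es y" by (auto simp: pathsn_def)
  then obtain \<pi> e where es: "es = \<pi>@[e]" by (metis length_Suc_conv_rev)
  then obtain z where "epath E x \<pi> z" "epath E z [e] y" using ep epath_append by metis
  moreover have "\<pi> \<in> pathsn E n x" using calculation l es by (auto simp: pathsn_def)
  ultimately have "(\<pi>,e) \<in> (SIGMA \<pi>:pathsn E n x. outE E (endp x \<pi>))"
    by (auto simp: outE_def dest: epath_endp)
  then show "es \<in> extp E x (pathsn E n x)" unfolding extp_def using es
    by (simp add: image_iff)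
qed

lemma avn_Suc_sub: "avn E F (Suc n) x \<subseteq> extp E x (avn E F n x)"
proof
  fix es assume a: "es \<in> avn E F (Suc n) x"
  then obtain y where l: "length es = Suc n" and ep: "epath E x es y" by (auto simp: pathsn_def avn_def)
  then obtain \<pi> e where es: "es = \<pi>@[e]" by (metis length_Suc_conv_rev)
  then obtain z where "epath E x \<pi> z" "epath E z [e] y" using ep epath_append by metis
  moreover have "\<forall>w\<in>F. \<not> sublist w (path_label \<pi>)"
    using a es sublist_app_r by (fastforce simp: avn_def path_label_def)
  ultimately have "\<pi> \<in> avn E F n x" "e \<in> outE E (endp x \<pi>)" using l es
    by (auto simp: avn_def pathsn_def outE_def dest: epath_endp)
  then have "(\<pi>,e) \<in> (SIGMA \<pi>:avn E F n x. outE E (endp x \<pi>))" by blast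
  then show "es \<in> extp E x (avn E F n x)" unfolding extp_def using es
    by (simp add: image_iff)
qed

lemma paths_fin: "x\<in>X \<Longrightarrow> finite (pathsn E n x) \<and> sum (path_prob p) (pathsn E n x) \<le> 1"
proof (induction n)
  case 0
  have "pathsn E 0 x = {[]}" by (auto simp: pathsn_def)
  then show ?case by (simp add: path_prob_def)
next
  case (Suc n)
  have f: "finite (extp E x (pathsn E n x))" using ext_finite Suc by blast
  have "sum (path_prob p) (pathsn E (Suc n) x) \<le> sum (path_prob p) (extp E x (pathsn E n x))"
    apply (rule sum_mono2[OF f paths_Suc_sub])
    using P_nonneg[of _ "Suc n" x] ext_sub[of "pathsn E n x" n x] by auto
  also have "\<dots> \<le> sum (path_prob p) (pathsn E n x)" using ext_sum Suc by blast
  finally show ?case using Suc f finite_subset[OF paths_Suc_sub] by auto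
qed

lemma avn_sub: "avn E F n x \<subseteq> pathsn E n x" by (auto simp: avn_def)

lemma avn_fin: "x\<in>X \<Longrightarrow> finite (avn E F n x)"
  using paths_fin finite_subset[OF avn_sub] by blast

lemma avn_mono: "x\<in>X \<Longrightarrow> sum (path_prob p) (avn E F (n+j) x) \<le> sum (path_prob p) (avn E F n x)"
proof (induction j)
  case 0 then show ?case by simp
next
  case (Suc j)
  have s: "avn E F (n+j) x \<subseteq> pathsn E (n+j) x" by (rule avn_sub)
  have f: "finite (extp E x (avn E F (n+j) x))" using ext_finite[OF Suc(2) avn_fin[OF Suc(2)] s] .
  have "sum (path_prob p) (avn E F (n + Suc j) x) \<le> sum (path_prob p) (extp E x (avn E F (n+j) x))"
    using avn_Suc_sub[of F "n+j" x] P_nonneg ext_sub[OF s]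
    by (intro sum_mono2[OF f]) auto
  also have "\<dots> \<le> sum (path_prob p) (avn E F (n+j) x)"
    using ext_sum[OF Suc(2) avn_fin[OF Suc(2)] s] .
  finally show ?case using Suc by linarith
qed

lemma pF_conv:
  assumes "x\<in>X"
  shows "(\<Sum>\<^sub>\<infinity>y\<in>X. pF E p F k x y) = sum (path_prob p) (avn E F k x)"
proof -
  let ?A = "avn E F k x"
  let ?Y = "endp x ` ?A"
  have fA: "finite ?A" using avn_fin assms by blast
  have eq: "\<And>y. avoiding_paths E F k x y = {es\<in>?A. endp x es = y}"
    by (auto simp: avoiding_paths_def avn_def pathsn_def dest: epath_endp)
  have pf: "\<And>y. pF E p F k x y = sum (path_prob p) {es\<in>?A. endp x es = y}"
    unfolding pF_def eq using fA by simp
  have YX: "?Y \<subseteq> X" using assms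
    by (auto simp: avn_def pathsn_def dest: epath_endp intro: endp_in)
  have "(\<Sum>\<^sub>\<infinity>y\<in>X. pF E p F k x y) = (\<Sum>\<^sub>\<infinity>y\<in>?Y. pF E p F k x y)"
    apply (rule infsum_cong_neutral) using YX by (auto simp: pf intro!: sum.neutral)
  also have "\<dots> = (\<Sum>y\<in>?Y. sum (path_prob p) {es\<in>?A. endp x es = y})"
    using fA by (simp add: pf)
  also have "\<dots> = sum (path_prob p) ?A"
    by (rule sum.group[OF fA]) (use fA in auto)
  finally show ?thesis .
qed

end

theorem mainTheorem15:
  fixes X :: "'v set" and E :: "('v,'a) edge set" and \<Sigma> :: "'a set"
    and p :: "('v,'a) edge \<Rightarrow> real" and \<alpha> :: real and F :: "'a list set"
  assumes "finite \<Sigma>"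
    and "E \<subseteq> X \<times> \<Sigma> \<times> X"
    and "strongly_connected X E"
    and "\<alpha> > 0"
    and "\<forall>e\<in>E. p e \<ge> \<alpha>"
    and "\<forall>x\<in>X. p summable_on {e\<in>E. edge_init e = x} \<and>
                 (\<Sum>\<^sub>\<infinity>e\<in>{e\<in>E. edge_init e = x}. p e) \<le> 1"
    and "finite F" and "F \<noteq> {}"
    and "\<forall>w\<in>F. w \<noteq> [] \<and> set w \<subseteq> \<Sigma>"
    and "relatively_dense F X E"
  shows "\<exists>k::nat. \<exists>\<epsilon>0::real. \<epsilon>0 > 0 \<and>
           (\<forall>x\<in>X. (\<Sum>\<^sub>\<infinity>y\<in>X. pF E p F k x y) \<le> 1 - \<epsilon>0)"
proof -
  interpret G X E p \<alpha>
    apply unfold_locales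
    using assms(2,4,5,6) by (auto simp: edge_init_def edge_term_def outE_def)
  obtain D where D: "\<forall>x\<in>X. \<exists>y\<in>X. \<exists>w\<in>F. dplus E x y \<le> D \<and> (\<exists>es z. epath E y es z \<and> path_label es = w)"
    using assms(10) unfolding relatively_dense_def by blast
  define L where "L = Max (length ` F)"
  define k where "k = D + L"
  define a where "a = min \<alpha> 1"
  have a0: "0 < a" "a \<le> 1" using assms(4) by (auto simp: a_def)
  have "\<forall>x\<in>X. (\<Sum>\<^sub>\<infinity>y\<in>X. pF E p F k x y) \<le> 1 - a ^ k"
  proof
    fix x assume x: "x\<in>X"
    obtain y w es z where y: "y\<in>X" "w\<in>F" "dplus E x y \<le> D" "epath E y es z" "path_label es = w"
      using D x by blast
    have "\<exists>n es. epath E x es y \<and> length es = n" using assms(3) x y unfolding strongly_connected_def by blast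
    then have "\<exists>es. epath E x es y \<and> length es = dplus E x y"
      unfolding dplus_def by (rule LeastI_ex)
    then obtain \<pi>1 where p1: "epath E x \<pi>1 y" "length \<pi>1 = dplus E x y" by blast
    define \<pi>0 where "\<pi>0 = \<pi>1 @ es"
    define m where "m = length \<pi>0"
    have lw: "length w \<le> L" unfolding L_def using y(2) assms(7) by auto
    have lesw: "length es = length w" using y(5) by (auto simp: path_label_def)
    have mk: "m \<le> k" unfolding m_def k_def \<pi>0_def using p1 y lw lesw by simp
    have ep0: "epath E x \<pi>0 z" unfolding \<pi>0_def using p1 y epath_append by metis
    have in0: "\<pi>0 \<in> pathsn E m x" using ep0 by (auto simp: pathsn_def m_def)
    have nav: "\<pi>0 \<notin> avn E F m x" using y(2,5)
      by (auto simp: avn_def \<pi>0_def path_label_def)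
    have fP: "finite (pathsn E m x)" using paths_fin x by blast
    have "sum (path_prob p) (avn E F m x) \<le> sum (path_prob p) (pathsn E m x - {\<pi>0})"
      apply (rule sum_mono2) using fP avn_sub nav P_nonneg by auto
    also have "\<dots> = sum (path_prob p) (pathsn E m x) - path_prob p \<pi>0"
      using sum.remove[OF fP in0, of "path_prob p"] by simp
    also have "\<dots> \<le> 1 - path_prob p \<pi>0" using paths_fin x by auto
    also have "\<dots> \<le> 1 - a ^ k"
    proof -
      have "a ^ k \<le> a ^ m" using power_decreasing[OF mk, of a] a0 by simp
      also have "\<dots> \<le> path_prob p \<pi>0" unfolding m_def
      proof (rule path_prob_lower)
        show "0 \<le> a" using a0 by simp
        show "\<forall>e\<in>set \<pi>0. a \<le> p e"
        proof
          fix e assume "e \<in> set \<pi>0"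
          then have "e \<in> E" using epath_set[OF ep0] by blast
          then have "\<alpha> \<le> p e" using assms(5) by blast
          moreover have "a \<le> \<alpha>" unfolding a_def by simp
          ultimately show "a \<le> p e" by linarith
        qed
      qed
      finally show ?thesis by simp
    qed
    finally have 1: "sum (path_prob p) (avn E F m x) \<le> 1 - a ^ k" .
    have "sum (path_prob p) (avn E F k x) \<le> sum (path_prob p) (avn E F m x)"
      using avn_mono[OF x, of F m "k - m"] mk by simp
    then show "(\<Sum>\<^sub>\<infinity>y\<in>X. pF E p F k x y) \<le> 1 - a ^ k" using pF_conv[OF x] 1 by simp
  qed
  moreover have "a ^ k > 0" using a0 by simp
  ultimately show ?thesis by blast
qed

end
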